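(* Let $R$ be a commutative multiplicative hyperring with identity having the zero absorbing property, let $\alpha$ be a good endomorphism of $R$, and let $I$ be a hyperideal of $R$. Suppose that for all $a,b\in R$, $a\circ b\subseteq I$ implies $a\in I$ or $\alpha(b^n)\subseteq I$ for some $n\in\mathbb N$. Then $\sqrt[\alpha]{I}$ is an $\alpha$-prime hyperideal of $R$.
   Context: A multiplicative hyperring is an abelian group $(R,+)$ with a hyperoperation $\circ:R\times R\to \mathcal P^*(R)$ (nonempty subsets) such that $a\circ(b\circ c)=(a\circ b)\circ c$, $a\circ(b+c)\subseteq a\circ b+a\circ c$, $(b+c)\circ a\subseteq b\circ a+c\circ a$, and $a\circ(-b)=(-a)\circ b=-(a\circ b)$. Products of subsets are unions of elementwise products, and $x^n=x\circ\cdots\circ x$ ($n$ factors). Commutative means $a\circ b=b\circ a$. An identity $1$ satisfies $a\in1\circ a$ for all $a$. $R$ has the zero absorbing property if $0\circ r=r\circ0=\{0\}$ for all $r$. A hyperideal is a nonempty $I$ closed under subtraction with $r\circ x\subseteq I$ for $r\in R$, $x\in I$. Standing assumption: all hyperideals are $\mathbf C$-hyperideals, i.e. for every finite product $A=r_1\circ\cdots\circ r_n$, $A\cap I\ne\emptyset$ implies $A\subseteq I$. A good endomorphism $\alpha$ satisfies $\alpha(x+y)=\alpha(x)+\alpha(y)$ and $\alpha(x\circ y)=\alpha(x)\circ\alpha(y)$; it is applied to sets elementwise. The $\alpha$-radical is $\sqrt[\alpha]{I}=\{r:\alpha(r^n)\subseteq I\text{ for some }n\in\mathbb N\}$. A hyperideal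 $J$ is $\alpha$-prime if for all $x,y$, $x\circ y\subseteq J$ implies $x\in J$ or $\alpha(y)\in J$. *)

theory Defs
  imports Main
begin

(* A hyperoperation on the carrier type 'a, whose additive abelian group is given by ab_group_add *)
type_synonym 'a hyperop = "'a \<Rightarrow> 'a \<Rightarrow> 'a set"

definition hprod :: "'a hyperop \<Rightarrow> 'a set \<Rightarrow> 'a set \<Rightarrow> 'a set" where
  "hprod m A B = (\<Union>a\<in>A. \<Union>b\<in>B. m a b)"

definition hsum :: "'a::ab_group_add set \<Rightarrow> 'a set \<Rightarrow> 'a set" where
  "hsum A B = {a + b | a b. a \<in> A \<and> b \<in> B}"

definition mult_hyperring :: "('a::ab_group_add) hyperop \<Rightarrow> bool" where
  "mult_hyperring m \<longleftrightarrow>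
     (\<forall>a b. m a b \<noteq> {}) \<and>
     (\<forall>a b c. hprod m {a} (m b c) = hprod m (m a b) {c}) \<and>
     (\<forall>a b c. m a (b + c) \<subseteq> hsum (m a b) (m a c)) \<and>
     (\<forall>a b c. m (b + c) a \<subseteq> hsum (m b a) (m c a)) \<and>
     (\<forall>a b. m a (- b) = uminus ` (m a b) \<and> m (- a) b = uminus ` (m a b))"

definition hcommutative :: "'a hyperop \<Rightarrow> bool" where
  "hcommutative m \<longleftrightarrow> (\<forall>a b. m a b = m b a)"

definition hidentity :: "'a hyperop \<Rightarrow> 'a \<Rightarrow> bool" where
  "hidentity m e \<longleftrightarrow> (\<forall>a. a \<in> m e a)"

definition zero_absorbing :: "('a::zero) hyperop \<Rightarrow> bool" where
  "zero_absorbing m \<longleftrightarrow> (\<forall>r. m 0 r = {0} \<and> m r 0 = {0})"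

(* hpow m x n = x^(n+1) = x \<circ> ... \<circ> x  (n+1 factors) *)
primrec hpow :: "'a hyperop \<Rightarrow> 'a \<Rightarrow> nat \<Rightarrow> 'a set" where
  "hpow m x 0 = {x}"
| "hpow m x (Suc n) = hprod m (hpow m x n) {x}"

fun hlistprod :: "'a hyperop \<Rightarrow> 'a list \<Rightarrow> 'a set" where
  "hlistprod m [] = {}"
| "hlistprod m [r] = {r}"
| "hlistprod m (r # rs) = hprod m {r} (hlistprod m rs)"

definition hyperideal :: "('a::ab_group_add) hyperop \<Rightarrow> 'a set \<Rightarrow> bool" where
  "hyperideal m I \<longleftrightarrow> I \<noteq> {} \<and> (\<forall>x\<in>I. \<forall>y\<in>I. x - y \<in> I) \<and>
     (\<forall>r x. x \<in> I \<longrightarrow> m r x \<subseteq> I)"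

definition C_hyperideal :: "('a::ab_group_add) hyperop \<Rightarrow> 'a set \<Rightarrow> bool" where
  "C_hyperideal m I \<longleftrightarrow> hyperideal m I \<and>
     (\<forall>rs. rs \<noteq> [] \<longrightarrow> hlistprod m rs \<inter> I \<noteq> {} \<longrightarrow> hlistprod m rs \<subseteq> I)"

definition good_endo :: "('a::ab_group_add) hyperop \<Rightarrow> ('a \<Rightarrow> 'a) \<Rightarrow> bool" where
  "good_endo m \<alpha> \<longleftrightarrow> (\<forall>x y. \<alpha> (x + y) = \<alpha> x + \<alpha> y) \<and>
     (\<forall>x y. \<alpha> ` (m x y) = m (\<alpha> x) (\<alpha> y))"

(* alpha-radical: r such that alpha(r^n) \<subseteq> I for some n \<ge> 1 (hpow m r k = r^(k+1)) *)
definition alpha_radical :: "'a hyperop \<Rightarrow> ('a \<Rightarrow> 'a) \<Rightarrow> 'a set \<Rightarrow> 'a set" where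
  "alpha_radical m \<alpha> I = {r. \<exists>k. \<alpha> ` (hpow m r k) \<subseteq> I}"

definition alpha_prime :: "('a::ab_group_add) hyperop \<Rightarrow> ('a \<Rightarrow> 'a) \<Rightarrow> 'a set \<Rightarrow> bool" where
  "alpha_prime m \<alpha> J \<longleftrightarrow> hyperideal m J \<and>
     (\<forall>x y. m x y \<subseteq> J \<longrightarrow> x \<in> J \<or> \<alpha> y \<in> J)"

end

theory Submission
  imports Defs
begin

lemma mh_ne: "mult_hyperring m \<Longrightarrow> m a b \<noteq> {}"
  unfolding mult_hyperring_def by (drule conjunct1) simp
lemma mh_assoc: "mult_hyperring m \<Longrightarrow> hprod m {a} (m b c) = hprod m (m a b) {c}"
  unfolding mult_hyperring_def by (drule conjunct2, drule conjunct1) simp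
lemma mh_distL: "mult_hyperring m \<Longrightarrow> m a (b + c) \<subseteq> hsum (m a b) (m a c)"
  unfolding mult_hyperring_def by (drule conjunct2, drule conjunct2, drule conjunct1) simp
lemma mh_distR: "mult_hyperring m \<Longrightarrow> m (b + c) a \<subseteq> hsum (m b a) (m c a)"
  unfolding mult_hyperring_def by (drule conjunct2, drule conjunct2, drule conjunct2, drule conjunct1) simp
lemma mh_neg1: "mult_hyperring m \<Longrightarrow> m a (- b) = uminus ` (m a b)"
  unfolding mult_hyperring_def by (drule conjunct2, drule conjunct2, drule conjunct2, drule conjunct2) simp
lemma mh_neg2: "mult_hyperring m \<Longrightarrow> m (- a) b = uminus ` (m a b)"
  unfolding mult_hyperring_def by (drule conjunct2, drule conjunct2, drule conjunct2, drule conjunct2) simp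

lemma hprod_single: "hprod m {a} {b} = m a b" by (simp add: hprod_def)

lemma hprod_mono: "A \<subseteq> A' \<Longrightarrow> B \<subseteq> B' \<Longrightarrow> hprod m A B \<subseteq> hprod m A' B'"
  by (auto simp: hprod_def)

lemma hprod_mem: "z \<in> hprod m A B \<longleftrightarrow> (\<exists>a\<in>A. \<exists>b\<in>B. z \<in> m a b)"
  unfolding hprod_def by blast

lemma hprod_assoc:
  assumes "mult_hyperring m"
  shows "hprod m (hprod m A B) C = hprod m A (hprod m B C)"
proof -
  have as0: "\<forall>a b c. hprod m {a} (m b c) = hprod m (m a b) {c}"
    using mh_assoc[OF assms] by blast
  have as: "(\<exists>w\<in>m a b. z \<in> m w c) \<longleftrightarrow> (\<exists>w\<in>m b c. z \<in> m a w)" for a b c z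
  proof -
    have "z \<in> hprod m {a} (m b c) \<longleftrightarrow> z \<in> hprod m (m a b) {c}" using as0 by simp
    then show ?thesis unfolding hprod_mem by blast
  qed
  show ?thesis
  proof (rule set_eqI)
    fix z
    have "z \<in> hprod m (hprod m A B) C \<longleftrightarrow> (\<exists>a\<in>A. \<exists>b\<in>B. \<exists>c\<in>C. \<exists>w\<in>m a b. z \<in> m w c)"
      unfolding hprod_def by blast
    also have "\<dots> \<longleftrightarrow> (\<exists>a\<in>A. \<exists>b\<in>B. \<exists>c\<in>C. \<exists>w\<in>m b c. z \<in> m a w)"
      using as by meson
    also have "\<dots> \<longleftrightarrow> z \<in> hprod m A (hprod m B C)"
      unfolding hprod_def by blast
    finally show "z \<in> hprod m (hprod m A B) C \<longleftrightarrow> z \<in> hprod m A (hprod m B C)" .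
  qed
qed

lemma hprod_comm:
  assumes "hcommutative m" shows "hprod m A B = hprod m B A"
proof -
  have h: "m a b = m b a" for a b using assms unfolding hcommutative_def by simp
  show ?thesis
  proof (rule set_eqI)
    fix z show "z \<in> hprod m A B \<longleftrightarrow> z \<in> hprod m B A"
      unfolding hprod_mem using h by metis
  qed
qed

lemma hprod_idealR:
  assumes "hyperideal m K" "B \<subseteq> K" shows "hprod m A B \<subseteq> K"
proof
  fix z assume "z \<in> hprod m A B"
  then obtain a b where ab: "a \<in> A" "b \<in> B" "z \<in> m a b" unfolding hprod_mem by blast
  have "m a b \<subseteq> K" using assms ab(2) unfolding hyperideal_def by blast
  then show "z \<in> K" using ab(3) by blast
qed

lemma hprod_idealL: "hcommutative m \<Longrightarrow> hyperideal m K \<Longrightarrow> A \<subseteq> K \<Longrightarrow> hprod m A B \<subseteq> K"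
proof -
  assume "hcommutative m" "hyperideal m K" "A \<subseteq> K"
  have "hprod m A B = hprod m B A" by (rule hprod_comm) fact
  then show ?thesis using hprod_idealR[of m K A B] \<open>hyperideal m K\<close> \<open>A \<subseteq> K\<close> by simp
qed

lemma hprod_ne:
  assumes "mult_hyperring m" "A \<noteq> {}" "B \<noteq> {}" shows "hprod m A B \<noteq> {}"
proof -
  obtain a b where "a \<in> A" "b \<in> B" using assms by blast
  moreover obtain z where "z \<in> m a b" using mh_ne[OF assms(1)] by blast
  ultimately have "z \<in> hprod m A B" unfolding hprod_mem by blast
  then show ?thesis by blast
qed

lemma hpow_ne: "mult_hyperring m \<Longrightarrow> hpow m x k \<noteq> {}"
proof (induction k)
  case 0 then show ?case by simp
next
  case (Suc k) then show ?case using hprod_ne[of m "hpow m x k" "{x}"] by simp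
qed

lemma hpow_add:
  assumes "mult_hyperring m"
  shows "hprod m (hpow m x i) (hpow m x j) = hpow m x (i+j+1)"
proof (induction j)
  case 0 then show ?case by simp
next
  case (Suc j)
  have "hprod m (hpow m x i) (hpow m x (Suc j)) = hprod m (hprod m (hpow m x i) (hpow m x j)) {x}"
    using hprod_assoc[OF assms] by simp
  also have "\<dots> = hpow m x (i + Suc j + 1)" using Suc by simp
  finally show ?case .
qed

lemma hpow_prod:
  assumes "mult_hyperring m" "hcommutative m" "z \<in> m x y"
  shows "hpow m z k \<subseteq> hprod m (hpow m x k) (hpow m y k)"
proof (induction k)
  case 0 then show ?case using assms(3) by (simp add: hprod_single)
next
  case (Suc k)
  let ?X = "hpow m x k" and ?Y = "hpow m y k"
  have A: "hprod m (hprod m ?X ?Y) (hprod m {x} {y}) = hprod m (hprod m ?X {x}) (hprod m ?Y {y})"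
  proof -
    have "hprod m (hprod m ?X ?Y) (hprod m {x} {y}) = hprod m ?X (hprod m (hprod m ?Y {x}) {y})"
      using hprod_assoc[OF assms(1)] by simp
    also have "\<dots> = hprod m ?X (hprod m (hprod m {x} ?Y) {y})"
      using hprod_comm[OF assms(2), of ?Y] by simp
    also have "\<dots> = hprod m (hprod m ?X {x}) (hprod m ?Y {y})"
      using hprod_assoc[OF assms(1)] by simp
    finally show ?thesis .
  qed
  have "hpow m z (Suc k) = hprod m (hpow m z k) {z}" by simp
  also have "\<dots> \<subseteq> hprod m (hprod m ?X ?Y) (hprod m {x} {y})"
    using Suc assms(3) by (intro hprod_mono) (auto simp: hprod_single)
  also have "\<dots> = hprod m (hpow m x (Suc k)) (hpow m y (Suc k))" using A by simp
  finally show ?case .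
qed

lemma hpow_pow:
  assumes "mult_hyperring m" "z \<in> hpow m x k"
  shows "hpow m z j \<subseteq> hpow m x ((k+1)*(j+1)-1)"
proof (induction j)
  case 0 then show ?case using assms by simp
next
  case (Suc j)
  have "hpow m z (Suc j) = hprod m (hpow m z j) {z}" by simp
  also have "\<dots> \<subseteq> hprod m (hpow m x ((k+1)*(j+1)-1)) (hpow m x k)"
    using Suc assms by (intro hprod_mono) auto
  also have "\<dots> = hpow m x ((k+1)*(j+1)-1 + k + 1)" using hpow_add[OF assms(1)] by simp
  also have "(k+1)*(j+1)-1 + k + 1 = (k+1)*(Suc j+1)-1" by simp
  finally show ?case .
qed

lemma img_hprod: "good_endo m \<alpha> \<Longrightarrow> \<alpha> ` hprod m A B = hprod m (\<alpha> ` A) (\<alpha> ` B)"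
  unfolding good_endo_def hprod_def by (simp add: image_UN)

lemma img_hpow: "good_endo m \<alpha> \<Longrightarrow> \<alpha> ` hpow m x k = hpow m (\<alpha> x) k"
  by (induction k) (simp_all add: img_hprod)

lemma hlistprod_cons: "rs \<noteq> [] \<Longrightarrow> hlistprod m (r#rs) = hprod m {r} (hlistprod m rs)"
  by (cases rs) auto

lemma hlistprod_rep:
  assumes "hcommutative m"
  shows "hlistprod m (replicate (Suc k) x) = hpow m x k"
proof (induction k)
  case 0 then show ?case by simp
next
  case (Suc k)
  have "hlistprod m (replicate (Suc (Suc k)) x) = hprod m {x} (hlistprod m (replicate (Suc k) x))"
    using hlistprod_cons[of "replicate (Suc k) x" m x] by simp
  then show ?case using Suc hprod_comm[OF assms] by simp
qed

lemma hlistprod_append: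
  assumes "mult_hyperring m"
  shows "xs \<noteq> [] \<Longrightarrow> ys \<noteq> [] \<Longrightarrow> hlistprod m (xs@ys) = hprod m (hlistprod m xs) (hlistprod m ys)"
proof (induction xs)
  case Nil then show ?case by simp
next
  case (Cons a xs)
  show ?case
  proof (cases "xs = []")
    case True then show ?thesis using Cons by (simp add: hlistprod_cons)
  next
    case False
    then show ?thesis using Cons hprod_assoc[OF assms] by (simp add: hlistprod_cons)
  qed
qed


lemma ideal_zero: "hyperideal m K \<Longrightarrow> (0::'a::ab_group_add) \<in> K"
  unfolding hyperideal_def by (metis all_not_in_conv diff_self)

lemma ideal_neg: "hyperideal m K \<Longrightarrow> x \<in> K \<Longrightarrow> - (x::'a::ab_group_add) \<in> K"
  using ideal_zero unfolding hyperideal_def by (metis diff_0)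

lemma ideal_add: "hyperideal m K \<Longrightarrow> x \<in> K \<Longrightarrow> y \<in> K \<Longrightarrow> (x::'a::ab_group_add) + y \<in> K"
  using ideal_neg unfolding hyperideal_def by (metis diff_minus_eq_add)

lemma hsum_ideal: "hyperideal m K \<Longrightarrow> A \<subseteq> K \<Longrightarrow> B \<subseteq> K \<Longrightarrow> hsum A B \<subseteq> K"
  unfolding hsum_def using ideal_add by blast

lemma hprod_hsum_ideal:
  assumes "mult_hyperring m" "hyperideal m K" "hprod m A C \<subseteq> K" "hprod m B C \<subseteq> K"
  shows "hprod m (hsum A B) C \<subseteq> K"
proof
  fix z assume "z \<in> hprod m (hsum A B) C"
  then obtain a b c where abc: "a \<in> A" "b \<in> B" "c \<in> C" "z \<in> m (a+b) c"
    by (auto simp: hprod_def hsum_def)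
  have "m (a+b) c \<subseteq> hsum (m a c) (m b c)" using mh_distR[OF assms(1)] by blast
  moreover have "m a c \<subseteq> K" using abc assms(3) unfolding hprod_def by blast
  moreover have "m b c \<subseteq> K" using abc assms(4) unfolding hprod_def by blast
  ultimately show "z \<in> K" using hsum_ideal[OF assms(2)] abc(4) by blast
qed

lemma hprod_distR:
  assumes "mult_hyperring m"
  shows "hprod m M {x+y} \<subseteq> hsum (hprod m M {x}) (hprod m M {y})"
proof
  fix z assume "z \<in> hprod m M {x+y}"
  then obtain w where w: "w \<in> M" "z \<in> m w (x+y)" by (auto simp: hprod_def)
  then have "z \<in> hsum (m w x) (m w y)" using mh_distL[OF assms] by blast
  then show "z \<in> hsum (hprod m M {x}) (hprod m M {y})" using w(1)
    unfolding hsum_def hprod_def by blast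
qed

lemma hpow_mono_ideal:
  assumes "hcommutative m" "hyperideal m K" "hpow m x n \<subseteq> K"
  shows "hpow m x (n+d) \<subseteq> K"
proof (induction d)
  case 0 then show ?case using assms by simp
next
  case (Suc d) then show ?case using hprod_idealL[OF assms(1,2)] by simp
qed

lemma hpow_mono_ideal':
  assumes "hcommutative m" "hyperideal m K" "hpow m x n \<subseteq> K" "n \<le> n'"
  shows "hpow m x n' \<subseteq> K"
  using hpow_mono_ideal[OF assms(1-3), of "n'-n"] assms(4) by simp

lemma hpow_neg:
  assumes "mult_hyperring m"
  shows "\<forall>z\<in>hpow m (-y) k. z \<in> hpow m y k \<or> -z \<in> hpow m y k"
proof (induction k)
  case 0 then show ?case by simp
next
  case (Suc k)
  show ?case
  proof
    fix z assume "z \<in> hpow m (-y) (Suc k)"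
    then obtain w where w: "w \<in> hpow m (-y) k" "z \<in> m w (-y)" by (auto simp: hprod_def)
    have e1: "m w (-y) = uminus ` m w y" and e2: "m (-w) y = uminus ` m w y"
      using mh_neg1[OF assms] mh_neg2[OF assms] by auto
    from Suc w(1) have "w \<in> hpow m y k \<or> -w \<in> hpow m y k" by blast
    then show "z \<in> hpow m y (Suc k) \<or> -z \<in> hpow m y (Suc k)"
    proof
      assume "w \<in> hpow m y k"
      then have "m w y \<subseteq> hpow m y (Suc k)" by (auto simp: hprod_def)
      moreover have "-z \<in> m w y" using w(2) e1 by auto
      ultimately show ?thesis by blast
    next
      assume "-w \<in> hpow m y k"
      then have "m (-w) y \<subseteq> hpow m y (Suc k)" by (auto simp: hprod_def)
      moreover have "z \<in> m (-w) y" using w(2) e1 e2 by auto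
      ultimately show ?thesis by blast
    qed
  qed
qed

definition mon :: "'a hyperop \<Rightarrow> 'a \<Rightarrow> 'a \<Rightarrow> nat \<Rightarrow> nat \<Rightarrow> 'a set" where
  "mon m x y a b = hlistprod m (replicate a x @ replicate b y)"

lemma mon_x:
  assumes "hcommutative m" "1 \<le> a + b"
  shows "hprod m (mon m x y a b) {x} = mon m x y (Suc a) b"
proof -
  have ne: "replicate a x @ replicate b y \<noteq> []" using assms(2) by auto
  have "hprod m (hlistprod m (replicate a x @ replicate b y)) {x} = hprod m {x} (hlistprod m (replicate a x @ replicate b y))"
    by (rule hprod_comm[OF assms(1)])
  also have "\<dots> = hlistprod m (x # (replicate a x @ replicate b y))"
    by (rule hlistprod_cons[OF ne, symmetric])
  also have "x # (replicate a x @ replicate b y) = replicate (Suc a) x @ replicate b y" by simp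
  finally show ?thesis unfolding mon_def .
qed

lemma mon_y:
  assumes "mult_hyperring m" "1 \<le> a + b"
  shows "hprod m (mon m x y a b) {y} = mon m x y a (Suc b)"
proof -
  have ne: "replicate a x @ replicate b y \<noteq> []" using assms(2) by auto
  have "replicate a x @ replicate (Suc b) y = (replicate a x @ replicate b y) @ [y]"
    by (simp add: replicate_append_same)
  moreover have "hlistprod m ((replicate a x @ replicate b y) @ [y]) = hprod m (hlistprod m (replicate a x @ replicate b y)) {y}"
    using hlistprod_append[OF assms(1) ne, of "[y]"] by (simp only: hlistprod.simps list.distinct not_False_eq_True)
  ultimately show ?thesis unfolding mon_def by (simp only:)
qed

lemma mon_K:
  assumes "mult_hyperring m" "hcommutative m" "hyperideal m K"
    "hpow m x n \<subseteq> K" "hpow m y n \<subseteq> K" "2*n+2 \<le> a + b"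
  shows "mon m x y a b \<subseteq> K"
proof (cases "n + 1 \<le> a")
  case True
  have xa: "hpow m x (a-1) \<subseteq> K" using hpow_mono_ideal'[OF assms(2,3,4)] True by simp
  have ra: "hlistprod m (replicate a x) = hpow m x (a-1)"
    using hlistprod_rep[OF assms(2), of "a-1" x] True by simp
  show ?thesis
  proof (cases "b = 0")
    case True then show ?thesis using xa ra unfolding mon_def by simp
  next
    case False
    then have "mon m x y a b = hprod m (hpow m x (a-1)) (hlistprod m (replicate b y))"
      unfolding mon_def using hlistprod_append[OF assms(1)] ra True by simp
    then show ?thesis using hprod_idealL[OF assms(2,3) xa] by simp
  qed
next
  case False
  then have b: "n + 1 \<le> b" using assms(6) by simp
  have yb: "hpow m y (b-1) \<subseteq> K" using hpow_mono_ideal'[OF assms(2,3,5)] b by simp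
  have rb: "hlistprod m (replicate b y) = hpow m y (b-1)"
    using hlistprod_rep[OF assms(2), of "b-1" y] b by simp
  show ?thesis
  proof (cases "a = 0")
    case True then show ?thesis using yb rb unfolding mon_def by simp
  next
    case False
    then have "mon m x y a b = hprod m (hlistprod m (replicate a x)) (hpow m y (b-1))"
      unfolding mon_def using hlistprod_append[OF assms(1)] rb b by simp
    then show ?thesis using hprod_idealR[OF assms(3) yb] by simp
  qed
qed

lemma binom_claim:
  assumes "mult_hyperring m" "hcommutative m" "hyperideal m K"
    "hpow m x n \<subseteq> K" "hpow m y n \<subseteq> K"
  shows "\<forall>a b. 1 \<le> a + b \<longrightarrow> 2*n+2 \<le> a+b+c+1 \<longrightarrow> hprod m (mon m x y a b) (hpow m (x+y) c) \<subseteq> K"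
proof (induction c)
  case 0
  show ?case
  proof (intro allI impI)
    fix a b :: nat assume h: "1 \<le> a + b" "2*n+2 \<le> a+b+0+1"
    have "hprod m (mon m x y a b) (hpow m (x+y) 0) \<subseteq> hsum (mon m x y (Suc a) b) (mon m x y a (Suc b))"
      using hprod_distR[OF assms(1), of "mon m x y a b" x y] mon_x[OF assms(2) h(1)] mon_y[OF assms(1) h(1)]
      by simp
    also have "\<dots> \<subseteq> K" using h by (intro hsum_ideal[OF assms(3)] mon_K[OF assms]) auto
    finally show "hprod m (mon m x y a b) (hpow m (x+y) 0) \<subseteq> K" .
  qed
next
  case (Suc c)
  show ?case
  proof (intro allI impI)
    fix a b :: nat assume h: "1 \<le> a + b" "2*n+2 \<le> a+b+Suc c+1"
    let ?M = "mon m x y a b" and ?S = "hpow m (x+y) c"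
    have "hprod m ?M (hpow m (x+y) (Suc c)) = hprod m ?M (hprod m {x+y} ?S)"
      using hprod_comm[OF assms(2), of ?S] by simp
    also have "\<dots> = hprod m (hprod m ?M {x+y}) ?S" using hprod_assoc[OF assms(1)] by simp
    also have "\<dots> \<subseteq> hprod m (hsum (mon m x y (Suc a) b) (mon m x y a (Suc b))) ?S"
      using hprod_distR[OF assms(1), of ?M x y] mon_x[OF assms(2) h(1)] mon_y[OF assms(1) h(1)]
      by (intro hprod_mono) auto
    also have "\<dots> \<subseteq> K"
      using Suc h by (intro hprod_hsum_ideal[OF assms(1,3)]) auto
    finally show "hprod m ?M (hpow m (x+y) (Suc c)) \<subseteq> K" .
  qed
qed

lemma rad_add:
  assumes "mult_hyperring m" "hcommutative m" "hyperideal m K"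
    "hpow m x n \<subseteq> K" "hpow m y n \<subseteq> K"
  shows "hpow m (x+y) (Suc (2*n+1)) \<subseteq> K"
proof -
  let ?S = "hpow m (x+y) (2*n+1)"
  have c: "hprod m (mon m x y a b) ?S \<subseteq> K" if "1 \<le> a+b" for a b
    using binom_claim[OF assms, of "2*n+1"] that by simp
  have "hpow m (x+y) (Suc (2*n+1)) = hprod m {x+y} ?S"
    using hprod_comm[OF assms(2), of ?S] by simp
  also have "\<dots> \<subseteq> hprod m (hsum {x} {y}) ?S"
    by (intro hprod_mono) (auto simp: hsum_def)
  also have "\<dots> \<subseteq> K"
    using c[of 1 0] c[of 0 1] unfolding mon_def by (intro hprod_hsum_ideal[OF assms(1,3)]) auto
  finally show ?thesis .
qed


theorem mainTheorem16:
  fixes m :: "'a::ab_group_add hyperop" and e :: 'a and \<alpha> :: "'a \<Rightarrow> 'a" and I :: "'a set"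
  assumes "mult_hyperring m" and "hcommutative m" and "hidentity m e" and "zero_absorbing m"
    and allC: "\<forall>J. hyperideal m J \<longrightarrow> C_hyperideal m J"
    and "good_endo m \<alpha>"
    and "hyperideal m I"
    and "\<forall>a b. m a b \<subseteq> I \<longrightarrow> a \<in> I \<or> (\<exists>k. \<alpha> ` (hpow m b k) \<subseteq> I)"
  shows "alpha_prime m \<alpha> (alpha_radical m \<alpha> I)"
proof -
  note mh = assms(1) and cm = assms(2) and ge = assms(6) and hI = assms(7) and hyp = assms(8)
  define K where "K = {z. \<alpha> z \<in> I}"
  have addh: "\<And>x y. \<alpha> (x + y) = \<alpha> x + \<alpha> y" using ge unfolding good_endo_def by blast
  have a0: "\<alpha> 0 = 0" using addh[of 0 0] by simp
  have adiff: "\<alpha> (x - y) = \<alpha> x - \<alpha> y" for x y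
    using addh[of "x - y" y] by (simp add: eq_diff_eq)
  have amul: "\<alpha> ` m x y = m (\<alpha> x) (\<alpha> y)" for x y using ge unfolding good_endo_def by blast
  have AK: "\<alpha> ` A \<subseteq> I \<longleftrightarrow> A \<subseteq> K" for A unfolding K_def by auto
  have radK: "alpha_radical m \<alpha> I = {r. \<exists>k. hpow m r k \<subseteq> K}"
    unfolding alpha_radical_def using AK by simp
  have hK: "hyperideal m K"
    unfolding hyperideal_def
  proof (intro conjI ballI allI impI)
    show "K \<noteq> {}" using ideal_zero[OF hI] a0 unfolding K_def by (metis empty_iff mem_Collect_eq)
  next
    fix x y assume "x \<in> K" "y \<in> K"
    then show "x - y \<in> K" using hI adiff unfolding K_def hyperideal_def by auto
  next
    fix r x assume "x \<in> K"
    then have "m (\<alpha> r) (\<alpha> x) \<subseteq> I" using hI unfolding K_def hyperideal_def by auto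
    then show "m r x \<subseteq> K" using amul[of r x] AK by metis
  qed
  have CI: "C_hyperideal m I" using allC hI by blast
  have Cuse: "hlistprod m rs \<subseteq> I" if "rs \<noteq> []" "hlistprod m rs \<inter> I \<noteq> {}" for rs
    using CI that unfolding C_hyperideal_def by blast
  have powC: "hpow m x k \<subseteq> I" if "hpow m x k \<inter> I \<noteq> {}" for x k
    using Cuse[of "replicate (Suc k) x"] that hlistprod_rep[OF cm] by simp
  let ?R = "{r. \<exists>k. hpow m r k \<subseteq> K}"
  have prodR: "m r x \<subseteq> ?R" if xR: "x \<in> ?R" for r x
  proof
    fix z assume z: "z \<in> m r x"
    from xR obtain k where k: "hpow m x k \<subseteq> K" by blast
    have "hpow m z k \<subseteq> hprod m (hpow m r k) (hpow m x k)" using hpow_prod[OF mh cm z] .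
    also have "\<dots> \<subseteq> K" using hprod_idealR[OF hK k] .
    finally show "z \<in> ?R" by blast
  qed
  have subR: "x - y \<in> ?R" if xyR: "x \<in> ?R" "y \<in> ?R" for x y
  proof -
    obtain kx ky where kx: "hpow m x kx \<subseteq> K" and ky: "hpow m y ky \<subseteq> K" using xyR by blast
    let ?n = "max kx ky"
    have xn: "hpow m x ?n \<subseteq> K" using hpow_mono_ideal'[OF cm hK kx] by simp
    have yn: "hpow m y ?n \<subseteq> K" using hpow_mono_ideal'[OF cm hK ky] by simp
    have yn': "hpow m (-y) ?n \<subseteq> K"
    proof
      fix z assume "z \<in> hpow m (-y) ?n"
      then have "z \<in> hpow m y ?n \<or> -z \<in> hpow m y ?n" using hpow_neg[OF mh] by blast
      then show "z \<in> K" using yn ideal_neg[OF hK] by (metis minus_minus subsetD)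
    qed
    have "hpow m (x + -y) (Suc (2*?n+1)) \<subseteq> K" using rad_add[OF mh cm hK xn yn'] .
    then show ?thesis by (metis (mono_tags, lifting) diff_conv_add_uminus mem_Collect_eq)
  qed
  have hR: "hyperideal m ?R"
    unfolding hyperideal_def
  proof (intro conjI ballI allI impI)
    have "hpow m 0 0 \<subseteq> K" using ideal_zero[OF hK] by simp
    then show "?R \<noteq> {}" by blast
  next
    fix x y assume "x \<in> ?R" "y \<in> ?R" then show "x - y \<in> ?R" using subR by blast
  next
    fix r x assume "x \<in> ?R" then show "m r x \<subseteq> ?R" using prodR by blast
  qed
  have primeR: "x \<in> ?R \<or> \<alpha> y \<in> ?R" if xy: "m x y \<subseteq> ?R" for x y
  proof -
    obtain z where z: "z \<in> m x y" using mh_ne[OF mh] by blast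
    then obtain k where k: "hpow m z k \<subseteq> K" using xy by blast
    let ?A = "hprod m (hpow m (\<alpha> x) k) (hpow m (\<alpha> y) k)"
    have "\<alpha> ` hpow m z k \<subseteq> \<alpha> ` hprod m (hpow m x k) (hpow m y k)"
      using hpow_prod[OF mh cm z] by blast
    also have "\<dots> = ?A" using img_hprod[OF ge] img_hpow[OF ge] by simp
    finally have sub: "\<alpha> ` hpow m z k \<subseteq> ?A" .
    have "\<alpha> ` hpow m z k \<subseteq> I" using k AK by blast
    moreover have "\<alpha> ` hpow m z k \<noteq> {}" using hpow_ne[OF mh] by blast
    ultimately have "?A \<inter> I \<noteq> {}" using sub by blast
    moreover have "?A = hlistprod m (replicate (Suc k) (\<alpha> x) @ replicate (Suc k) (\<alpha> y))"
      using hlistprod_append[OF mh, of "replicate (Suc k) (\<alpha> x)" "replicate (Suc k) (\<alpha> y)"]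
        hlistprod_rep[OF cm, of k "\<alpha> x"] hlistprod_rep[OF cm, of k "\<alpha> y"]
      by (simp del: replicate_Suc)
    ultimately have AI: "?A \<subseteq> I" using Cuse by (metis Nil_is_append_conv replicate_Suc list.distinct(1))
    show ?thesis
    proof (cases "hpow m (\<alpha> x) k \<subseteq> I")
      case True
      then have "hpow m x k \<subseteq> K" using AK img_hpow[OF ge] by metis
      then show ?thesis by blast
    next
      case False
      then obtain a where a: "a \<in> hpow m (\<alpha> x) k" "a \<notin> I" by blast
      obtain b where b: "b \<in> hpow m (\<alpha> y) k" using hpow_ne[OF mh] by blast
      have "m a b \<subseteq> I" using AI a b unfolding hprod_def by blast
      then obtain j where j: "\<alpha> ` hpow m b j \<subseteq> I" using hyp a(2) by blast
      let ?N = "(k+1)*(j+1)-1"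
      have "\<alpha> ` hpow m b j \<subseteq> \<alpha> ` hpow m (\<alpha> y) ?N" using hpow_pow[OF mh b] by blast
      also have "\<dots> = hpow m (\<alpha> (\<alpha> y)) ?N" using img_hpow[OF ge] by simp
      finally have "hpow m (\<alpha> (\<alpha> y)) ?N \<inter> I \<noteq> {}"
        using j hpow_ne[OF mh, of b j] by blast
      then have "hpow m (\<alpha> (\<alpha> y)) ?N \<subseteq> I" using powC by blast
      then have "hpow m (\<alpha> y) ?N \<subseteq> K" using AK img_hpow[OF ge] by metis
      then show ?thesis by blast
    qed
  qed
  show ?thesis unfolding alpha_prime_def radK using hR primeR by blast
qed

end
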